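(* For integers $\alpha\geq k\geq 2$, we have $\alpha-1+(k-1)\left\lfloor\frac{\alpha-1}{k-1}\right\rfloor\leq \tau(k,\alpha)\leq 2\alpha-2$.
   Context: For integers $k,\alpha\geq1$, $\tau(k,\alpha)$ is the largest integer $n$ such that there exists a $k$-uniform hypergraph on $n$ vertices with independence number less than $\alpha$ and no loose path of length two, i.e., no two edges intersecting in exactly one vertex. (The independence number is the largest size of a vertex set containing no edge.) *)

theory Defs
  imports Main
begin

definition k_uniform :: "nat \<Rightarrow> 'a set \<Rightarrow> 'a set set \<Rightarrow> bool" where
  "k_uniform k V E \<longleftrightarrow> (\<forall>e\<in>E. e \<subseteq> V \<and> card e = k)"

definition no_loose_path2 :: "'a set set \<Rightarrow> bool" where
  "no_loose_path2 E \<longleftrightarrow> (\<forall>e\<in>E. \<forall>f\<in>E. e \<noteq> f \<longrightarrow> card (e \<inter> f) \<noteq> 1)"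

definition independent_set :: "'a set \<Rightarrow> 'a set set \<Rightarrow> 'a set \<Rightarrow> bool" where
  "independent_set V E S \<longleftrightarrow> S \<subseteq> V \<and> (\<forall>e\<in>E. \<not> e \<subseteq> S)"

definition indep_num_less :: "'a set \<Rightarrow> 'a set set \<Rightarrow> nat \<Rightarrow> bool" where
  "indep_num_less V E \<alpha> \<longleftrightarrow> (\<forall>S. independent_set V E S \<longrightarrow> card S < \<alpha>)"

definition tau :: "nat \<Rightarrow> nat \<Rightarrow> nat" where
  "tau k \<alpha> = (GREATEST n. \<exists>E :: nat set set.
      k_uniform k {..<n} E \<and> indep_num_less {..<n} E \<alpha> \<and> no_loose_path2 E)"

end

theory Submission
  imports Defs
begin

lemma upper_aux:
  fixes V :: "'a set"
  assumes k2: "k \<ge> 2" and fin: "finite V" and ku: "k_uniform k V E"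
    and ind: "indep_num_less V E \<alpha>" and nl: "no_loose_path2 E"
  shows "card V \<le> 2 * \<alpha> - 2"
proof -
  have ne: "e \<noteq> {}" if "e \<in> E" for e
    using ku that k2 unfolding k_uniform_def by auto
  have "independent_set V E {}" unfolding independent_set_def using ne by auto
  moreover have "\<forall>S. independent_set V E S \<longrightarrow> card S < \<alpha>"
    using ind unfolding indep_num_less_def by blast
  ultimately obtain I where I: "independent_set V E I"
    and Imax: "\<forall>S. independent_set V E S \<longrightarrow> card S \<le> card I"
    using ex_has_greatest_nat[of "independent_set V E" "{}" card \<alpha>] by blast
  have IV: "I \<subseteq> V" using I unfolding independent_set_def by auto
  have finI: "finite I" using IV fin finite_subset by blast
  have "\<exists>e. e \<in> E \<and> x \<in> e \<and> e \<subseteq> insert x I" if "x \<in> V - I" for x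
  proof (rule ccontr)
    assume "\<not> ?thesis"
    then have "independent_set V E (insert x I)"
      using I that unfolding independent_set_def by blast
    then have "card (insert x I) \<le> card I" using Imax by blast
    with that finI show False by simp
  qed
  then obtain g where g: "\<And>x. x \<in> V - I \<Longrightarrow> g x \<in> E \<and> x \<in> g x \<and> g x \<subseteq> insert x I"
    by metis
  define N where "N = (\<Union>x\<in>V - I. g x - {x})"
  define J where "J = V - N"
  have NI: "N \<subseteq> I" unfolding N_def using g by blast
  have J: "independent_set V E J"
    unfolding independent_set_def
  proof (intro conjI ballI)
    show "J \<subseteq> V" unfolding J_def by auto
  next
    fix f assume fE: "f \<in> E"
    show "\<not> f \<subseteq> J"
    proof
      assume fJ: "f \<subseteq> J"
      have "\<not> f \<subseteq> I" using I fE unfolding independent_set_def by blast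
      then obtain x where xf: "x \<in> f" and xI: "x \<notin> I" by blast
      have xV: "x \<in> V - I" using xf fJ xI unfolding J_def by blast
      have gx: "g x \<in> E" "x \<in> g x" "g x \<subseteq> insert x I" using g[OF xV] by auto
      have sub: "g x - {x} \<subseteq> N" unfolding N_def using xV by blast
      have "f \<inter> g x = {x}"
        using xf gx(2) sub fJ unfolding J_def by blast
      then have "card (f \<inter> g x) = 1" by simp
      then have "f = g x" using nl fE gx(1) unfolding no_loose_path2_def by blast
      moreover have "card (g x) = k" using ku gx(1) unfolding k_uniform_def by blast
      then have "\<not> g x \<subseteq> {x}" using k2
        by (metis card.empty card.insert empty_iff finite.intros(1) insert_absorb
            le_antisym not_numeral_le_zero numeral_le_one_iff semiring_norm(69)
            subset_singletonD card_1_singleton_iff One_nat_def one_le_numeral)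
      then obtain y where "y \<in> g x" "y \<noteq> x" by blast
      ultimately show False using sub fJ unfolding J_def by blast
    qed
  qed
  have cI: "card I < \<alpha>" "card J < \<alpha>"
    using I J ind unfolding indep_num_less_def by auto
  have "V = I \<union> J" using IV NI unfolding J_def by blast
  then have "card V \<le> card I + card J" by (metis card_Un_le)
  with cI show ?thesis by linarith
qed


lemma blocks_disj:
  fixes m b c v :: nat
  assumes "v \<in> {b*m..<b*m+m}" "v \<in> {c*m..<c*m+m}"
  shows "b = c"
proof -
  have "v div m = b" using assms(1) by (intro div_nat_eqI) (auto simp: algebra_simps)
  moreover have "v div m = c" using assms(2) by (intro div_nat_eqI) (auto simp: algebra_simps)
  ultimately show ?thesis by simp
qed

lemma count_blocks:
  fixes S :: "nat set"
  assumes "\<And>b. b < q \<Longrightarrow> card (S \<inter> {b*m..<b*m+m}) \<le> t"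
  shows "j \<le> q \<Longrightarrow> card (S \<inter> {..<j*m}) \<le> j * t"
proof (induction j)
  case 0
  then show ?case by simp
next
  case (Suc j)
  have "S \<inter> {..<Suc j * m} = (S \<inter> {..<j*m}) \<union> (S \<inter> {j*m..<j*m+m})" by auto
  then have "card (S \<inter> {..<Suc j * m}) \<le> card (S \<inter> {..<j*m}) + card (S \<inter> {j*m..<j*m+m})"
    by (metis card_Un_le)
  also have "\<dots> \<le> j * t + t" using Suc assms[of j] by simp
  finally show ?case by simp
qed

lemma construction:
  fixes k q r :: nat
  assumes k2: "k \<ge> 2"
  defines "m \<equiv> 2 * (k - 1)"
  defines "E \<equiv> {e. \<exists>b<q. e \<subseteq> {b*m..<b*m+m} \<and> card e = k}"
  shows "k_uniform k {..<q*m+r} E \<and> indep_num_less {..<q*m+r} E (q*(k-1)+r+1) \<and> no_loose_path2 E"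
proof (intro conjI)
  show "k_uniform k {..<q*m+r} E"
    unfolding k_uniform_def E_def
  proof (intro ballI conjI)
    fix e assume "e \<in> {e. \<exists>b<q. e \<subseteq> {b*m..<b*m+m} \<and> card e = k}"
    then obtain b where b: "b < q" "e \<subseteq> {b*m..<b*m+m}" "card e = k" by blast
    have "b*m+m \<le> q*m" using b(1) by (metis add.commute mult_Suc mult_le_mono1 Suc_leI)
    then show "e \<subseteq> {..<q*m+r}" using b(2) by auto
    show "card e = k" using b by simp
  qed
next
  show "no_loose_path2 E"
    unfolding no_loose_path2_def
  proof (intro ballI impI)
    fix e f assume eE: "e \<in> E" and fE: "f \<in> E" and "e \<noteq> f"
    obtain b where b: "b < q" "e \<subseteq> {b*m..<b*m+m}" "card e = k" using eE unfolding E_def by blast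
    obtain c where c: "c < q" "f \<subseteq> {c*m..<c*m+m}" "card f = k" using fE unfolding E_def by blast
    show "card (e \<inter> f) \<noteq> 1"
    proof (cases "b = c")
      case True
      have fe: "finite e" "finite f" using b(2) c(2) finite_subset by blast+
      have "e \<union> f \<subseteq> {b*m..<b*m+m}" using b c True by auto
      then have "card (e \<union> f) \<le> m" by (metis card_atLeastLessThan card_mono finite_atLeastLessThan add_diff_cancel_left')
      moreover have "card (e \<union> f) + card (e \<inter> f) = card e + card f" using card_Un_Int fe by metis
      ultimately have "card (e \<inter> f) \<ge> 2" using b(3) c(3) k2 unfolding m_def by linarith
      then show ?thesis by simp
    next
      case False
      have "e \<inter> f = {}" using blocks_disj b(2) c(2) False by blast
      then show ?thesis by simp
    qed
  qed
next
  show "indep_num_less {..<q*m+r} E (q*(k-1)+r+1)"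
    unfolding indep_num_less_def
  proof (intro allI impI)
    fix S assume S: "independent_set {..<q*m+r} E S"
    have blk: "card (S \<inter> {b*m..<b*m+m}) \<le> k - 1" if "b < q" for b
    proof (rule ccontr)
      assume "\<not> ?thesis"
      then have "k \<le> card (S \<inter> {b*m..<b*m+m})" by simp
      then obtain e where e: "e \<subseteq> S \<inter> {b*m..<b*m+m}" "card e = k"
        by (meson obtain_subset_with_card_n)
      then have "e \<in> E" unfolding E_def using that by blast
      with e S show False unfolding independent_set_def by blast
    qed
    have c1: "card (S \<inter> {..<q*m}) \<le> q * (k-1)"
      using count_blocks[of q S m "k-1" q] blk by simp
    have "S = (S \<inter> {..<q*m}) \<union> (S \<inter> {q*m..<q*m+r})" using S unfolding independent_set_def by auto
    then have "card S \<le> card (S \<inter> {..<q*m}) + card (S \<inter> {q*m..<q*m+r})" by (metis card_Un_le)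
    also have "card (S \<inter> {q*m..<q*m+r}) \<le> r"
      by (metis card_atLeastLessThan card_mono finite_atLeastLessThan inf_le2 add_diff_cancel_left')
    finally show "card S < q*(k-1)+r+1" using c1 by linarith
  qed
qed

theorem proposition1p6:
  fixes k \<alpha> :: nat
  assumes "k \<ge> 2" and "\<alpha> \<ge> k"
  shows "\<alpha> - 1 + (k - 1) * ((\<alpha> - 1) div (k - 1)) \<le> tau k \<alpha> \<and> tau k \<alpha> \<le> 2 * \<alpha> - 2"
proof -
  define P where "P = (\<lambda>n. \<exists>E :: nat set set.
      k_uniform k {..<n} E \<and> indep_num_less {..<n} E \<alpha> \<and> no_loose_path2 E)"
  have tau: "tau k \<alpha> = Greatest P" unfolding tau_def P_def by simp
  have bound: "\<And>n. P n \<Longrightarrow> n \<le> 2 * \<alpha> - 2"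
    unfolding P_def using upper_aux[OF assms(1)] by (metis card_lessThan finite_lessThan)
  define q where "q = (\<alpha> - 1) div (k - 1)"
  define r where "r = (\<alpha> - 1) mod (k - 1)"
  have a: "\<alpha> = q*(k-1)+r+1" unfolding q_def r_def using assms div_mult_mod_eq[of "\<alpha> - 1" "k - 1"] by linarith
  have n0: "\<alpha> - 1 + (k - 1) * ((\<alpha> - 1) div (k - 1)) = q * (2*(k-1)) + r"
    using a unfolding q_def[symmetric] by simp
  have "P (q * (2*(k-1)) + r)"
  proof -
    have "\<exists>E :: nat set set. k_uniform k {..<q * (2*(k-1)) + r} E \<and> indep_num_less {..<q * (2*(k-1)) + r} E (q*(k-1)+r+1) \<and> no_loose_path2 E"
      using construction[OF assms(1), of q r] by blast
    then show ?thesis unfolding P_def using a by simp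
  qed
  then have "q * (2*(k-1)) + r \<le> Greatest P" "P (Greatest P)"
    using Greatest_le_nat GreatestI_nat bound by blast+
  then show ?thesis using n0 tau bound by simp
qed

end
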